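(* Let $W_n$ be the wheel graph on $n\geq 4$ vertices, i.e. a cycle on $n-1$ vertices together with one additional vertex adjacent to all of them. Let $c_0:V(W_n)\to\mathbb{Z}$ be any initial chip configuration. Then the sequence of configurations $(c_t)_{t\ge0}$ produced by the diffusion process is eventually periodic, i.e. there exist $t\geq 0$ and $p\geq 1$ with $c_{t+p}=c_t$.
   Context: Diffusion process: for a finite simple graph $G$ and a chip configuration $c_t:V(G)\to\mathbb{Z}$ (negative values allowed), the next configuration is defined simultaneously for every vertex $u$ by $c_{t+1}(u)=c_t(u)-|\{w\in N(u): c_t(u)>c_t(w)\}|+|\{w\in N(u): c_t(u)<c_t(w)\}|$. *)

theory Defs
  imports Main
begin

(* A finite simple graph is given by a vertex set V and a symmetric irreflexive
   adjacency relation E.  Neighbourhood of u: N(u) = {w \<in> V. E u w}. *)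

definition diffusion_step :: "'a set \<Rightarrow> ('a \<Rightarrow> 'a \<Rightarrow> bool) \<Rightarrow> ('a \<Rightarrow> int) \<Rightarrow> ('a \<Rightarrow> int)" where
  "diffusion_step V E c = (\<lambda>u.
     c u - int (card {w \<in> V. E u w \<and> c u > c w})
         + int (card {w \<in> V. E u w \<and> c u < c w}))"

definition diffusion :: "'a set \<Rightarrow> ('a \<Rightarrow> 'a \<Rightarrow> bool) \<Rightarrow> ('a \<Rightarrow> int) \<Rightarrow> nat \<Rightarrow> ('a \<Rightarrow> int)" where
  "diffusion V E c0 t = (diffusion_step V E ^^ t) c0"

(* Wheel graph W_n on vertex set {0..<n}: vertex 0 is the hub, adjacent to all
   others; vertices 1..n-1 form a cycle 1 - 2 - ... - (n-1) - 1. *)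
definition wheel_V :: "nat \<Rightarrow> nat set" where
  "wheel_V n = {0..<n}"

definition wheel_E :: "nat \<Rightarrow> nat \<Rightarrow> nat \<Rightarrow> bool" where
  "wheel_E n u w \<longleftrightarrow> u < n \<and> w < n \<and> u \<noteq> w \<and>
     (u = 0 \<or> w = 0 \<or>
      (u \<noteq> 0 \<and> w \<noteq> 0 \<and> ((u mod (n - 1)) + 1 = w \<or> (w mod (n - 1)) + 1 = u)))"

end

theory Submission
  imports Defs "HOL-Library.FuncSet"
begin

definition dd :: "'a set \<Rightarrow> ('a \<Rightarrow> 'a \<Rightarrow> bool) \<Rightarrow> ('a \<Rightarrow> int) \<Rightarrow> 'a \<Rightarrow> int" where
  "dd V E c u = (\<Sum>w\<in>V. if E u w then sgn (c w - c u) else 0)"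

definition D2 :: "'a set \<Rightarrow> ('a \<Rightarrow> 'a \<Rightarrow> bool) \<Rightarrow> ('a \<Rightarrow> int) \<Rightarrow> int" where
  "D2 V E c = (\<Sum>u\<in>V. \<Sum>w\<in>V. if E u w then \<bar>c u - c w\<bar> else 0)"

lemma card_int_sum:
  assumes "finite V"
  shows "int (card {w \<in> V. P w}) = (\<Sum>w\<in>V. if P w then 1 else 0)"
  using assms by (simp add: sum.inter_filter[symmetric])

lemma step_eq:
  assumes "finite V"
  shows "diffusion_step V E c u = c u + dd V E c u"
proof -
  have "dd V E c u = (\<Sum>w\<in>V. (if E u w \<and> c u < c w then 1 else 0) - (if E u w \<and> c u > c w then 1 else 0))"
    unfolding dd_def by (rule sum.cong) (auto simp: sgn_if)
  also have "\<dots> = int (card {w \<in> V. E u w \<and> c u < c w}) - int (card {w \<in> V. E u w \<and> c u > c w})"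
    by (simp add: sum_subtractf card_int_sum[OF assms])
  finally show ?thesis unfolding diffusion_step_def by simp
qed

lemma sum_dd:
  assumes "finite V" "\<And>u w. E u w \<Longrightarrow> E w u"
  shows "(\<Sum>u\<in>V. dd V E c u) = 0"
proof -
  let ?f = "\<lambda>u w. if E u w then sgn (c w - c u) else (0::int)"
  have "(\<Sum>u\<in>V. \<Sum>w\<in>V. ?f u w) = (\<Sum>w\<in>V. \<Sum>u\<in>V. ?f u w)" by (rule sum.swap)
  also have "\<dots> = (\<Sum>w\<in>V. \<Sum>u\<in>V. - ?f w u)"
    apply (rule sum.cong[OF refl])+ using assms(2) by (auto simp: sgn_if)
  also have "\<dots> = - (\<Sum>w\<in>V. \<Sum>u\<in>V. ?f w u)" by (simp add: sum_negf)
  finally show ?thesis unfolding dd_def by simp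
qed

lemma sum_c_dd:
  assumes "finite V" "\<And>u w. E u w \<Longrightarrow> E w u"
  shows "2 * (\<Sum>u\<in>V. c u * dd V E c u) = - D2 V E c"
proof -
  let ?g = "\<lambda>u w. if E u w then c u * sgn (c w - c u) else (0::int)"
  have X: "(\<Sum>u\<in>V. c u * dd V E c u) = (\<Sum>u\<in>V. \<Sum>w\<in>V. ?g u w)"
    unfolding dd_def by (simp add: sum_distrib_left if_distrib cong: if_cong)
  have "(\<Sum>u\<in>V. \<Sum>w\<in>V. ?g u w) = (\<Sum>w\<in>V. \<Sum>u\<in>V. ?g u w)" by (rule sum.swap)
  hence "2 * (\<Sum>u\<in>V. \<Sum>w\<in>V. ?g u w) = (\<Sum>u\<in>V. \<Sum>w\<in>V. ?g u w + ?g w u)"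
    by (simp add: sum.distrib)
  also have "\<dots> = (\<Sum>u\<in>V. \<Sum>w\<in>V. - (if E u w then \<bar>c u - c w\<bar> else 0))"
    apply (rule sum.cong[OF refl])+ using assms(2) by (auto simp: sgn_if abs_if)
  finally show ?thesis unfolding X D2_def by (simp add: sum_negf)
qed

lemma abs_dd:
  assumes "finite V"
  shows "\<bar>dd V E c u\<bar> \<le> int (card V)"
proof -
  have "\<bar>dd V E c u\<bar> \<le> (\<Sum>w\<in>V. \<bar>if E u w then sgn (c w - c u) else 0\<bar>)"
    unfolding dd_def by (rule sum_abs)
  also have "\<dots> \<le> (\<Sum>w\<in>V. 1)" by (rule sum_mono) (auto simp: abs_sgn_eq)
  finally show ?thesis by simp
qed

lemma energy_step:
  assumes "finite V" "\<And>u w. E u w \<Longrightarrow> E w u"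
  shows "(\<Sum>u\<in>V. (c u + dd V E c u)^2) \<le> (\<Sum>u\<in>V. (c u)^2) - D2 V E c + int (card V)^3"
proof -
  have "(\<Sum>u\<in>V. (c u + dd V E c u)^2) = (\<Sum>u\<in>V. (c u)^2) + 2 * (\<Sum>u\<in>V. c u * dd V E c u) + (\<Sum>u\<in>V. (dd V E c u)^2)"
    by (simp add: power2_sum sum.distrib sum_distrib_left mult.assoc)
  moreover have "(\<Sum>u\<in>V. (dd V E c u)^2) \<le> (\<Sum>u\<in>V. (int (card V))^2)"
  proof (rule sum_mono)
    fix u assume "u \<in> V"
    have "\<bar>dd V E c u\<bar>^2 \<le> (int (card V))^2"
      by (rule power_mono[OF abs_dd[OF assms(1)]]) simp
    thus "(dd V E c u)^2 \<le> (int (card V))^2" by simp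
  qed
  moreover have "(\<Sum>u\<in>V. (int (card V))^2) = int (card V)^3"
    by (simp add: power2_eq_square power3_eq_cube)
  moreover have "2 * (\<Sum>u\<in>V. c u * dd V E c u) = - D2 V E c"
    by (rule sum_c_dd) (use assms in auto)
  ultimately show ?thesis by linarith
qed

lemma int_abs_le_sq: "\<bar>x::int\<bar> \<le> x^2"
proof (cases "x = 0")
  case False
  hence "\<bar>x\<bar> * 1 \<le> \<bar>x\<bar> * \<bar>x\<bar>" by (intro mult_left_mono) auto
  thus ?thesis by (simp add: power2_eq_square abs_mult_self_eq)
qed simp

theorem theorem9:
  fixes n :: nat and c0 :: "nat \<Rightarrow> int"
  assumes "n \<ge> 4"
  shows "\<exists>t p. p \<ge> 1 \<and>
           (\<forall>v \<in> wheel_V n. diffusion (wheel_V n) (wheel_E n) c0 (t + p) v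
                            = diffusion (wheel_V n) (wheel_E n) c0 t v)"
proof -
  define V where "V = wheel_V n"
  define E where "E = wheel_E n"
  have finV: "finite V" by (simp add: V_def wheel_V_def)
  have cardV: "card V = n" by (simp add: V_def wheel_V_def)
  have symE: "\<And>u w. E u w \<Longrightarrow> E w u" unfolding E_def wheel_E_def by auto
  have hub: "\<And>u. u \<in> V \<Longrightarrow> u \<noteq> 0 \<Longrightarrow> E u 0"
    unfolding E_def V_def wheel_E_def wheel_V_def by auto
  have zV: "0 \<in> V" using assms by (simp add: V_def wheel_V_def)
  define c where "c = diffusion V E c0"
  have cS: "\<And>t u. c (Suc t) u = c t u + dd V E (c t) u"
    by (simp add: c_def diffusion_def step_eq finV)
  define S where "S = (\<Sum>u\<in>V. c0 u)"
  have sumc: "(\<Sum>u\<in>V. c t u) = S" for t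
  proof (induction t)
    case 0 show ?case by (simp add: c_def diffusion_def S_def)
  next
    case (Suc t)
    have "(\<Sum>u\<in>V. c (Suc t) u) = (\<Sum>u\<in>V. c t u) + (\<Sum>u\<in>V. dd V E (c t) u)"
      by (simp add: cS sum.distrib)
    then show ?case using Suc sum_dd[OF finV symE] by simp
  qed
  define R where "R = int n ^ 3"
  define En where "En t = (\<Sum>u\<in>V. (c t u)^2)" for t
  define K where "K = max (En 0) (int n * (\<bar>S\<bar> + 2*R)^2 + R)"
  have Rnn: "R \<ge> 0" by (simp add: R_def)
  have stepb: "En (Suc t) \<le> En t - D2 V E (c t) + R" for t
    using energy_step[OF finV symE, where c="c t"] by (simp add: En_def cS R_def cardV)
  have D2nn: "D2 V E f \<ge> 0" for f unfolding D2_def by (intro sum_nonneg) auto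
  have D2G: "(\<Sum>u\<in>V. \<bar>f u - f 0\<bar>) \<le> D2 V E f" for f
    unfolding D2_def
  proof (rule sum_mono)
    fix u assume uV: "u \<in> V"
    show "\<bar>f u - f 0\<bar> \<le> (\<Sum>w\<in>V. if E u w then \<bar>f u - f w\<bar> else 0)"
    proof (cases "u = 0")
      case True thus ?thesis by (simp add: sum_nonneg)
    next
      case False
      have "(if E u 0 then \<bar>f u - f 0\<bar> else 0) \<le> (\<Sum>w\<in>V. if E u w then \<bar>f u - f w\<bar> else 0)"
        by (rule member_le_sum[OF zV]) (auto simp: finV)
      thus ?thesis using hub[OF uV False] by simp
    qed
  qed
  have Eb: "En t \<le> K" for t
  proof (induction t)
    case 0 show ?case by (simp add: K_def)
  next
    case (Suc t)
    show ?case
    proof (cases "D2 V E (c t) \<ge> R")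
      case True thus ?thesis using stepb[of t] Suc by linarith
    next
      case False
      let ?f = "c t"
      have G: "(\<Sum>u\<in>V. \<bar>?f u - ?f 0\<bar>) < R" using D2G[of ?f] False by linarith
      have dif: "\<bar>?f u - ?f 0\<bar> \<le> R" if "u \<in> V" for u
      proof -
        have "\<bar>?f u - ?f 0\<bar> \<le> (\<Sum>u\<in>V. \<bar>?f u - ?f 0\<bar>)"
          by (rule member_le_sum[OF that]) (auto simp: finV)
        thus ?thesis using G by linarith
      qed
      have "int n * ?f 0 - S = (\<Sum>u\<in>V. ?f 0 - ?f u)"
        using sumc[of t] by (simp add: sum_subtractf cardV)
      hence "\<bar>int n * ?f 0 - S\<bar> \<le> (\<Sum>u\<in>V. \<bar>?f u - ?f 0\<bar>)"
        by (metis (no_types, lifting) abs_minus_commute sum.cong sum_abs)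
      hence h1: "\<bar>int n * ?f 0\<bar> \<le> \<bar>S\<bar> + R" using G by linarith
      have "\<bar>?f 0\<bar> \<le> \<bar>int n * ?f 0\<bar>" using assms
        by (simp add: abs_mult mult_le_cancel_right1)
      hence h0: "\<bar>?f 0\<bar> \<le> \<bar>S\<bar> + R" using h1 by linarith
      have sq: "(?f u)^2 \<le> (\<bar>S\<bar> + 2*R)^2" if "u \<in> V" for u
      proof -
        have "\<bar>?f u\<bar> \<le> \<bar>S\<bar> + 2*R" using dif[OF that] h0 by linarith
        hence "\<bar>?f u\<bar>^2 \<le> (\<bar>S\<bar> + 2*R)^2" by (rule power_mono) simp
        thus ?thesis by simp
      qed
      have "En t \<le> (\<Sum>u\<in>V. (\<bar>S\<bar> + 2*R)^2)" unfolding En_def by (rule sum_mono) (rule sq)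
      hence "En t \<le> int n * (\<bar>S\<bar> + 2*R)^2" by (simp add: cardV)
      thus ?thesis using stepb[of t] D2nn[of "c t"] by (simp add: K_def)
    qed
  qed
  have bnd: "c t u \<in> {-K..K}" if "u \<in> V" for t u
  proof -
    have "(c t u)^2 \<le> En t" unfolding En_def
      by (rule member_le_sum[OF that]) (auto simp: finV)
    hence "\<bar>c t u\<bar> \<le> K" using Eb[of t] int_abs_le_sq[of "c t u"] by linarith
    thus ?thesis by auto
  qed
  define f where "f t = restrict (c t) V" for t
  have fin: "finite (PiE V (\<lambda>_. {-K..K}))" by (rule finite_PiE[OF finV]) simp
  have "range f \<subseteq> PiE V (\<lambda>_. {-K..K})" using bnd by (auto simp: f_def)
  hence "finite (range f)" using fin finite_subset by blast
  hence "\<not> inj f" using finite_imageD infinite_UNIV_nat by blast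
  then obtain t1 t2 where ne: "t1 \<noteq> t2" and eq: "f t1 = f t2" unfolding inj_def by blast
  have agree: "c t1 v = c t2 v" if "v \<in> V" for v
    using eq that unfolding f_def by (metis restrict_apply')
  show ?thesis
  proof (cases "t1 < t2")
    case True
    thus ?thesis using agree
      by (intro exI[of _ t1] exI[of _ "t2 - t1"]) (auto simp: c_def V_def E_def)
  next
    case False
    hence "t2 < t1" using ne by simp
    thus ?thesis using agree
      by (intro exI[of _ t2] exI[of _ "t1 - t2"]) (auto simp: c_def V_def E_def)
  qed
qed

end
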